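(* Let $K\ge 1$ be an integer, let $\lambda_1,\dots,\lambda_K>0$, $\Psi>0$ and $r_{min}\ge 0$ be real numbers. For $\rho=(\rho_1,\dots,\rho_K)\in[0,\infty)^K$ and $i\in\{1,\dots,K\}$ define the (relaxed) unicast rate $$r_i^U(\rho)=\log_2\!\left(1+\frac{\rho_i\lambda_i}{\sum_{j=1}^{i-1}\rho_j\lambda_i+\Psi}\right).$$ Define $\rho_{1,min},\dots,\rho_{K,min}$ recursively as the numbers for which user $i$ achieves exactly rate $r_{min}$ when user $j$ is allocated $\rho_{j,min}$ for all $j$, i.e. $$r_{min}=\log_2\!\left(1+\frac{\rho_{i,min}\lambda_i}{\sum_{j=1}^{i-1}\rho_{j,min}\lambda_i+\Psi}\right),\quad\text{equivalently}\quad \rho_{i,min}=(2^{r_{min}}-1)\Big(\sum_{j=1}^{i-1}\rho_{j,min}+\Psi/\lambda_i\Big),$$ and let $\rho_{sum}^{min}=\sum_{i=1}^K\rho_{i,min}$. Then $$\rho_{sum}^{min}=(2^{r_{min}}-1)\,\Psi\sum_{i=0}^{K-1}\frac{2^{i r_{min}}}{\lambda_{K-i}}.$$ Moreover, let $\triangle\rho_1,\dots,\triangle\rho_K\ge 0$, set $\rho_i=\rho_{i,min}+\triangle\rho_i$ for each $i$, and let $\triangle r_i^U=r_i^U(\rho)-r_{min}$. Define $$\rho_i^e=\Big(\triangle\rho_i-(2^{r_{min}}-1)\sum_{j=1}^{i-1}\triangle\rho_j\Big)2^{(K-i)r_{min}},\qquad n_i^e=\Big(\Psi/\lambda_i+\sum_{j=1}^{i}\rho_{j,min}\Big)2^{(K-i)r_{min}}.$$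 Then $\sum_{i=1}^K r_i^U(\rho)=Kr_{min}+\sum_{i=1}^K\triangle r_i^U$ and, for every $i\in\{1,\dots,K\}$, $$\triangle r_i^U=\log_2\!\left(1+\frac{\rho_i^e}{n_i^e+\sum_{j=1}^{i-1}\rho_j^e}\right).$$
   Context: This arises in a NOMA downlink with $K$ users decoded by successive interference cancellation: $\rho_i$ is the transmit SNR allocated to user $i$'s unicast signal, $\lambda_i$ is user $i$'s estimated channel gain, and $\Psi>0$ is a constant effective noise term (in the paper $\Psi=\rho b+a$ with $a=1/(1-\phi^2)$, $b=\phi^2\Omega_\epsilon/(1-\phi^2)$). $\rho_{i,min}$ is the minimum SNR giving user $i$ rate $r_{min}$ and $\triangle\rho_i$ is the excess SNR allocated to user $i$. Empty sums are zero. *)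

theory Defs
  imports Complex_Main
begin

text \<open>Relaxed unicast rate of user i (users indexed 1..K).\<close>
definition rU :: "(nat \<Rightarrow> real) \<Rightarrow> real \<Rightarrow> (nat \<Rightarrow> real) \<Rightarrow> nat \<Rightarrow> real" where
  "rU lam Psi rho i =
     log 2 (1 + rho i * lam i / ((\<Sum>j\<in>{1..<i}. rho j * lam i) + Psi))"

end

theory Submission
  imports Defs
begin

lemma pw: "(2::real) powr (real n * r) = (2 powr r) ^ n"
  by (simp add: powr_realpow[symmetric] powr_powr mult.commute)

theorem proposition1:
  fixes K :: nat and lam :: "nat \<Rightarrow> real" and Psi rmin :: real
    and rhomin drho :: "nat \<Rightarrow> real"
  assumes K: "K \<ge> 1"
    and lam_pos: "\<forall>i\<in>{1..K}. lam i > 0"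
    and Psi_pos: "Psi > 0"
    and rmin_nn: "rmin \<ge> 0"
    and rhomin_def: "\<forall>i\<in>{1..K}. rhomin i =
        (2 powr rmin - 1) * ((\<Sum>j\<in>{1..<i}. rhomin j) + Psi / lam i)"
    and drho_nn: "\<forall>i\<in>{1..K}. drho i \<ge> 0"
  shows "(\<Sum>i\<in>{1..K}. rhomin i) =
           (2 powr rmin - 1) * Psi * (\<Sum>i\<in>{0..<K}. 2 powr (real i * rmin) / lam (K - i))
       \<and> (let rho = (\<lambda>i. rhomin i + drho i);
             dr = (\<lambda>i. rU lam Psi rho i - rmin);
             rhoe = (\<lambda>i. (drho i - (2 powr rmin - 1) * (\<Sum>j\<in>{1..<i}. drho j))
                          * 2 powr (real (K - i) * rmin));
             ne = (\<lambda>i. (Psi / lam i + (\<Sum>j\<in>{1..i}. rhomin j)) * 2 powr (real (K - i) * rmin))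
         in (\<Sum>i\<in>{1..K}. rU lam Psi rho i) = real K * rmin + (\<Sum>i\<in>{1..K}. dr i)
            \<and> (\<forall>i\<in>{1..K}. dr i = log 2 (1 + rhoe i / (ne i + (\<Sum>j\<in>{1..<i}. rhoe j)))))"
proof -
  define q where "q = (2::real) powr rmin"
  have q1: "q \<ge> 1" unfolding q_def using rmin_nn ge_one_powr_ge_zero by simp
  have qp: "q > 0" using q1 by simp
  have rd: "\<And>i. i \<in> {1..K} \<Longrightarrow> rhomin i = (q - 1) * ((\<Sum>j\<in>{1..<i}. rhomin j) + Psi / lam i)"
    using rhomin_def q_def by auto
  have rnn: "\<And>i. i \<in> {1..K} \<Longrightarrow> rhomin i \<ge> 0"
  proof -
    fix i show "i \<in> {1..K} \<Longrightarrow> rhomin i \<ge> 0"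
    proof (induction i rule: less_induct)
      case (less i)
      have "(\<Sum>j\<in>{1..<i}. rhomin j) \<ge> 0"
        by (rule sum_nonneg) (use less in auto)
      moreover have "Psi / lam i > 0" using less lam_pos Psi_pos by auto
      ultimately show ?case using rd[OF less.prems] q1 by simp
    qed
  qed
  have A: "n \<le> K \<Longrightarrow> (\<Sum>i\<in>{1..<n+1}. rhomin i) = (q - 1) * Psi * (\<Sum>i\<in>{1..n}. q^(n-i) / lam i)" for n
  proof (induction n)
    case 0 then show ?case by simp
  next
    case (Suc n)
    have e: "(\<Sum>i\<in>{1..Suc n}. q^(Suc n-i) / lam i) = q * (\<Sum>i\<in>{1..n}. q^(n-i) / lam i) + 1 / lam (Suc n)"
      by (simp add: sum_distrib_left Suc_diff_le mult.commute)
    have "(\<Sum>i\<in>{1..<Suc n+1}. rhomin i) = (\<Sum>i\<in>{1..<n+1}. rhomin i) + rhomin (Suc n)" by simp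
    also have "\<dots> = (q - 1) * Psi * (\<Sum>i\<in>{1..n}. q^(n-i) / lam i) + (q - 1) * ((q - 1) * Psi * (\<Sum>i\<in>{1..n}. q^(n-i) / lam i) + Psi / lam (Suc n))"
      using rd[of "Suc n"] Suc by simp
    also have "\<dots> = (q - 1) * Psi * (\<Sum>i\<in>{1..Suc n}. q^(Suc n-i) / lam i)"
      unfolding e by (simp add: algebra_simps)
    finally show ?case .
  qed
  have part1: "(\<Sum>i\<in>{1..K}. rhomin i) =
           (2 powr rmin - 1) * Psi * (\<Sum>i\<in>{0..<K}. 2 powr (real i * rmin) / lam (K - i))"
  proof -
    have "(\<Sum>i\<in>{1..K}. rhomin i) = (\<Sum>i\<in>{1..<K+1}. rhomin i)"
      by (rule sum.cong) auto
    also have "\<dots> = (q - 1) * Psi * (\<Sum>i\<in>{1..K}. q^(K-i) / lam i)" using A by simp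
    also have "(\<Sum>i\<in>{1..K}. q^(K-i) / lam i) = (\<Sum>i\<in>{0..<K}. q^i / lam (K - i))"
      by (rule sum.reindex_bij_witness[of _ "\<lambda>i. K - i" "\<lambda>i. K - i"]) auto
    finally show ?thesis by (simp add: pw q_def)
  qed
  define D where "D = (\<lambda>i. \<Sum>j\<in>{1..<i}. drho j)"
  have B: "n \<le> K \<Longrightarrow> (\<Sum>j\<in>{1..<n+1}. (drho j - (q - 1) * D j) * q^(K-j)) = q^(K-n) * D (n+1)" for n
  proof (induction n)
    case 0 then show ?case by (simp add: D_def)
  next
    case (Suc n)
    have qq: "q^(K-n) = q * q^(K - Suc n)" using Suc.prems
      by (metis Suc_diff_le Suc_le_lessD diff_Suc_Suc power_Suc)
    have "D (Suc n + 1) = D (n+1) + drho (Suc n)" by (simp add: D_def)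
    then show ?case using Suc qq by (simp add: algebra_simps)
  qed
  show ?thesis
    unfolding Let_def
  proof (intro conjI part1 ballI)
    show "(\<Sum>i\<in>{1..K}. rU lam Psi (\<lambda>i. rhomin i + drho i) i) =
      real K * rmin + (\<Sum>i\<in>{1..K}. rU lam Psi (\<lambda>i. rhomin i + drho i) i - rmin)"
      by (simp add: sum_subtractf)
  next
    fix i assume i: "i \<in> {1..K}"
    define S where "S = (\<Sum>j\<in>{1..<i}. rhomin j)"
    define P where "P = Psi / lam i"
    define m where "m = q ^ (K - i)"
    have lp: "lam i > 0" using i lam_pos by auto
    have Pp: "P > 0" using lp Psi_pos P_def by simp
    have Sn: "S \<ge> 0" unfolding S_def by (rule sum_nonneg) (use i rnn in auto)
    have Dn: "D i \<ge> 0" unfolding D_def by (rule sum_nonneg) (use i drho_nn in auto)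
    have dn: "drho i \<ge> 0" using i drho_nn by auto
    have mp: "m > 0" using qp m_def by simp
    have ri: "rhomin i = (q - 1) * (S + P)" using rd[OF i] S_def P_def by simp
    have T: "(\<Sum>j\<in>{1..<i}. (drho j - (2 powr rmin - 1) * (\<Sum>j\<in>{1..<j}. drho j)) * 2 powr (real (K - j) * rmin))
       = q * m * D i"
    proof -
      have "(\<Sum>j\<in>{1..<i}. (drho j - (2 powr rmin - 1) * (\<Sum>j\<in>{1..<j}. drho j)) * 2 powr (real (K - j) * rmin))
          = (\<Sum>j\<in>{1..<(i-1)+1}. (drho j - (q - 1) * D j) * q^(K-j))"
        unfolding pw q_def[symmetric] D_def using i by simp
      also have "\<dots> = q^(K-(i-1)) * D i"
      proof -
        have ii: "i - 1 + 1 = i" using i by simp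
        have "i - 1 \<le> K" using i by auto
        from B[OF this] show ?thesis unfolding ii .
      qed
      also have "q^(K-(i-1)) = q * m" unfolding m_def using i
        by (metis Suc_diff_le atLeastAtMost_iff diff_Suc_Suc le_add_diff_inverse plus_1_eq_Suc power_Suc)
      finally show ?thesis .
    qed
    have rhoe: "(drho i - (2 powr rmin - 1) * (\<Sum>j\<in>{1..<i}. drho j)) * 2 powr (real (K - i) * rmin)
        = (drho i - (q - 1) * D i) * m" unfolding pw q_def[symmetric] D_def m_def by simp
    have ne: "(Psi / lam i + (\<Sum>j\<in>{1..i}. rhomin j)) * 2 powr (real (K - i) * rmin)
        = (P + S + rhomin i) * m"
    proof -
      have "(\<Sum>j\<in>{1..i}. rhomin j) = S + rhomin i" unfolding S_def using i
        by (metis Suc_le_mono add.commute atLeastAtMost_iff atLeastLessThanSuc_atLeastAtMost le_SucI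
            sum.atLeastLessThan_Suc le_refl Suc_eq_plus1)
      then show ?thesis unfolding pw q_def[symmetric] m_def P_def by simp
    qed
    have ru: "rU lam Psi (\<lambda>i. rhomin i + drho i) i = log 2 (1 + (rhomin i + drho i) / (S + D i + P))"
    proof -
      have "(\<Sum>j\<in>{1..<i}. (rhomin j + drho j) * lam i) = (S + D i) * lam i"
        by (simp add: S_def D_def distrib_right sum.distrib sum_distrib_right)
      moreover have "(rhomin i + drho i) * lam i / ((S + D i) * lam i + Psi) = (rhomin i + drho i) / (S + D i + P)"
      proof -
        have "Psi = P * lam i" using lp P_def by simp
        moreover have "S + D i + P > 0" using Sn Dn Pp by simp
        ultimately have "(S + D i) * lam i + Psi = (S + D i + P) * lam i" by (simp add: algebra_simps)
        then show ?thesis using lp by simp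
      qed
      ultimately show ?thesis by (simp add: rU_def)
    qed
    have X: "1 + (rhomin i + drho i) / (S + D i + P) > 0"
      using ri q1 Sn Pp Dn dn by (simp add: add_pos_nonneg)
    have "rU lam Psi (\<lambda>i. rhomin i + drho i) i - rmin = log 2 ((1 + (rhomin i + drho i) / (S + D i + P)) / q)"
      unfolding ru using X qp by (simp add: log_divide q_def)
    also have "(1 + (rhomin i + drho i) / (S + D i + P)) / q
       = 1 + (drho i - (q - 1) * D i) * m / ((P + S + rhomin i) * m + q * m * D i)"
    proof -
      define E where "E = S + D i + P"
      have Ep: "E > 0" using Sn Dn Pp E_def by simp
      have d1: "(P + S + rhomin i) * m + q * m * D i = (q * E) * m"
        using ri E_def by (simp add: algebra_simps)
      have l: "(1 + (rhomin i + drho i) / E) / q = (E + rhomin i + drho i) / (q * E)"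
        using Ep qp by (simp add: field_simps)
      have r: "1 + (drho i - (q - 1) * D i) * m / ((q * E) * m) = (q * E + drho i - (q - 1) * D i) / (q * E)"
        using Ep qp mp by (simp add: field_simps)
      have "E + rhomin i + drho i = q * E + drho i - (q - 1) * D i"
        using ri E_def by (simp add: algebra_simps)
      then show ?thesis unfolding d1 r using l E_def by simp
    qed
    finally show "rU lam Psi (\<lambda>i. rhomin i + drho i) i - rmin =
         log 2 (1 + (drho i - (2 powr rmin - 1) * (\<Sum>j\<in>{1..<i}. drho j)) * 2 powr (real (K - i) * rmin) /
                ((Psi / lam i + (\<Sum>j\<in>{1..i}. rhomin j)) * 2 powr (real (K - i) * rmin) +
                 (\<Sum>j\<in>{1..<i}. (drho j - (2 powr rmin - 1) * (\<Sum>j\<in>{1..<j}. drho j)) * 2 powr (real (K - j) * rmin))))"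
      unfolding T rhoe ne .
  qed
qed

end
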